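(* Let $f:\{0,1\}^3\to\{0,1\}$ be $f(x_1,x_2,x_3)=(x_1\wedge x_2)\vee(\bar x_1\wedge\bar x_2\wedge x_3)$, where $\bar y$ denotes the negation of the bit $y$. Then $Q_E(f)=2$, while every parity decision tree computing $f$ has depth at least $3$.
   Context: Quantum query model: a $t$-query quantum query algorithm on inputs $x\in\{0,1\}^m$ acts on a Hilbert space $\mathcal H_{\rm in}\otimes\mathcal H_{\rm work}\otimes\mathcal H_{\rm out}$, where $\mathcal H_{\rm in}$ has orthonormal basis $|0\rangle,\dots,|m\rangle$, $\mathcal H_{\rm work}$ is a finite-dimensional workspace of arbitrary size, and $\mathcal H_{\rm out}$ is one qubit. It is specified by input-independent unitaries $U_0,\dots,U_t$, and on input $x$ produces the state $U_tO_xU_{t-1}O_x\cdots O_xU_0|0\rangle$ ($t$ applications of $O_x$), where the oracle $O_x$ acts on $\mathcal H_{\rm in}$ by $|i\rangle\mapsto(-1)^{x_i}|i\rangle$ with the convention $x_0=0$ (and as the identity on the other registers). The output is obtained by measuring $\mathcal H_{\rm out}$ in the computational basis. The algorithm computes $h$ exactly if for every $x$ the output equals $h(x)$ with probability $1$. $Q_E(h)$ is the minimum $t$ such that some $t$-query quantum query algorithm computes $h$ exactly. A parity decision tree is a rooted binary tree in which every internal vertex has exactly two children and each internal vertex $v$ is labelled by a subset $S_v$ of input positions, and each leaf is labelled $0$ or $1$. On input $x$, evaluation starts at the root; at internal vertex $v$ the parity $\bigoplus_{i\in S_v}x_i$ is computed, and the left subtree is evaluated if it is $0$ and the right subtree if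 it is $1$; the output is the label of the leaf reached. Its depth is the maximum length of a root-to-leaf path. *)

theory Defs
  imports Complex_Main
begin

text \<open>An input x in {0,1}^m is a bool list of length m; bit i (1 <= i <= m) is xs ! (i-1);
  by convention bit 0 is False (x_0 = 0).  Out-of-range positions also read False.\<close>

definition bit :: "bool list \<Rightarrow> nat \<Rightarrow> bool" where
  "bit xs i = (if 1 \<le> i \<and> i \<le> length xs then xs ! (i - 1) else False)"

text \<open>Hilbert space H_in (x) H_work (x) H_out of dimension (m+1) * W * 2, W >= 1 the workspace
  dimension.  Basis index of |i>|w>|b> is (i * W + w) * 2 + b.  Operators are N x N complex
  matrices given as functions nat => nat => complex (entries outside [0,N) ignored),
  states are vectors nat => complex.\<close>

definition qdim :: "nat \<Rightarrow> nat \<Rightarrow> nat" where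
  "qdim m W = (m + 1) * W * 2"

definition is_unitary :: "nat \<Rightarrow> (nat \<Rightarrow> nat \<Rightarrow> complex) \<Rightarrow> bool" where
  "is_unitary N U \<longleftrightarrow>
     (\<forall>j<N. \<forall>k<N. (\<Sum>i<N. cnj (U i j) * U i k) = (if j = k then 1 else 0))"

definition apply_op :: "nat \<Rightarrow> (nat \<Rightarrow> nat \<Rightarrow> complex) \<Rightarrow> (nat \<Rightarrow> complex) \<Rightarrow> (nat \<Rightarrow> complex)" where
  "apply_op N U v = (\<lambda>i. \<Sum>j<N. U i j * v j)"

text \<open>Query operator O_x: |i>|w>|b> -> (-1)^{x_i} |i>|w>|b>; the input register of basis index k is
  k div (2 W).\<close>
definition query_op :: "nat \<Rightarrow> bool list \<Rightarrow> (nat \<Rightarrow> complex) \<Rightarrow> (nat \<Rightarrow> complex)" where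
  "query_op W xs v = (\<lambda>k. (if bit xs (k div (2 * W)) then -1 else 1) * v k)"

definition init_state :: "nat \<Rightarrow> complex" where
  "init_state = (\<lambda>k. if k = 0 then 1 else 0)"

fun run_rest :: "nat \<Rightarrow> nat \<Rightarrow> bool list \<Rightarrow> (nat \<Rightarrow> nat \<Rightarrow> complex) list
                   \<Rightarrow> (nat \<Rightarrow> complex) \<Rightarrow> (nat \<Rightarrow> complex)" where
  "run_rest m W xs [] v = v"
| "run_rest m W xs (U # Us) v = run_rest m W xs Us (apply_op (qdim m W) U (query_op W xs v))"

text \<open>Final state U_t O_x ... O_x U_0 |0> for Us = [U_0, ..., U_t].\<close>
fun final_state :: "nat \<Rightarrow> nat \<Rightarrow> bool list \<Rightarrow> (nat \<Rightarrow> nat \<Rightarrow> complex) list \<Rightarrow> (nat \<Rightarrow> complex)" where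
  "final_state m W xs [] = init_state"
| "final_state m W xs (U # Us) = run_rest m W xs Us (apply_op (qdim m W) U init_state)"

definition out_prob :: "nat \<Rightarrow> nat \<Rightarrow> (nat \<Rightarrow> complex) \<Rightarrow> bool \<Rightarrow> real" where
  "out_prob m W v b = (\<Sum>k | k < qdim m W \<and> (odd k \<longleftrightarrow> b). (cmod (v k))\<^sup>2)"

definition is_query_alg :: "nat \<Rightarrow> nat \<Rightarrow> nat \<Rightarrow> (nat \<Rightarrow> nat \<Rightarrow> complex) list \<Rightarrow> bool" where
  "is_query_alg m t W Us \<longleftrightarrow> 1 \<le> W \<and> length Us = t + 1 \<and> (\<forall>U\<in>set Us. is_unitary (qdim m W) U)"

definition computes_exactly :: "nat \<Rightarrow> nat \<Rightarrow> (nat \<Rightarrow> nat \<Rightarrow> complex) list \<Rightarrow> (bool list \<Rightarrow> bool) \<Rightarrow> bool" where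
  "computes_exactly m W Us h \<longleftrightarrow>
     (\<forall>xs. length xs = m \<longrightarrow> out_prob m W (final_state m W xs Us) (h xs) = 1)"

definition Q_E :: "nat \<Rightarrow> (bool list \<Rightarrow> bool) \<Rightarrow> nat" where
  "Q_E m h = (LEAST t. \<exists>W Us. is_query_alg m t W Us \<and> computes_exactly m W Us h)"

datatype pdt = Leaf bool | Node "nat set" pdt pdt

fun pdt_valid :: "nat \<Rightarrow> pdt \<Rightarrow> bool" where
  "pdt_valid m (Leaf b) = True"
| "pdt_valid m (Node S l r) = (S \<subseteq> {1..m} \<and> pdt_valid m l \<and> pdt_valid m r)"

definition parity :: "nat set \<Rightarrow> bool list \<Rightarrow> bool" where
  "parity S xs = odd (card {i \<in> S. bit xs i})"

fun pdt_eval :: "pdt \<Rightarrow> bool list \<Rightarrow> bool" where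
  "pdt_eval (Leaf b) xs = b"
| "pdt_eval (Node S l r) xs = (if parity S xs then pdt_eval r xs else pdt_eval l xs)"

fun pdt_depth :: "pdt \<Rightarrow> nat" where
  "pdt_depth (Leaf b) = 0"
| "pdt_depth (Node S l r) = Suc (max (pdt_depth l) (pdt_depth r))"

definition pdt_computes :: "nat \<Rightarrow> pdt \<Rightarrow> (bool list \<Rightarrow> bool) \<Rightarrow> bool" where
  "pdt_computes m T h \<longleftrightarrow> pdt_valid m T \<and> (\<forall>xs. length xs = m \<longrightarrow> pdt_eval T xs = h xs)"

definition f3 :: "bool list \<Rightarrow> bool" where
  "f3 xs = ((bit xs 1 \<and> bit xs 2) \<or> (\<not> bit xs 1 \<and> \<not> bit xs 2 \<and> bit xs 3))"

end

theory Submission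
  imports Defs
begin


lemma cnorm_sq: "complex_of_real ((cmod z)\<^sup>2) = cnj z * z"
  by (metis complex_norm_square mult.commute)

lemma unitary_norm:
  assumes "is_unitary N U"
  shows "(\<Sum>i<N. (cmod (apply_op N U v i))\<^sup>2) = (\<Sum>i<N. (cmod (v i))\<^sup>2)"
proof -
  have uni: "\<And>j k. j<N \<Longrightarrow> k<N \<Longrightarrow> (\<Sum>i<N. cnj (U i j) * U i k) = (if j = k then 1 else 0)"
    using assms unfolding is_unitary_def by blast
  have "complex_of_real (\<Sum>i<N. (cmod (apply_op N U v i))\<^sup>2)
        = (\<Sum>i<N. cnj (apply_op N U v i) * apply_op N U v i)"
    by (simp only: of_real_sum cnorm_sq)
  also have "\<dots> = (\<Sum>i<N. \<Sum>k<N. \<Sum>j<N. (cnj (v j) * v k) * (cnj (U i j) * U i k))"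
    unfolding apply_op_def by (simp add: sum_product mult_ac)
  also have "\<dots> = (\<Sum>k<N. \<Sum>j<N. (cnj (v j) * v k) * (\<Sum>i<N. cnj (U i j) * U i k))"
    by (subst sum.swap, rule sum.cong, rule refl, subst sum.swap) (simp add: sum_distrib_left)
  also have "\<dots> = (\<Sum>k<N. \<Sum>j<N. (cnj (v j) * v k) * (if j = k then 1 else 0))"
    by (intro sum.cong refl) (simp add: uni)
  also have "\<dots> = (\<Sum>j<N. cnj (v j) * v j)"
    by (simp add: if_distrib cong: if_cong)
  also have "\<dots> = complex_of_real (\<Sum>i<N. (cmod (v i))\<^sup>2)"
    by (simp only: of_real_sum cnorm_sq)
  finally show ?thesis using of_real_eq_iff by blast
qed

lemma query_norm:
  "(\<Sum>i<N. (cmod (query_op W xs v i))\<^sup>2) = (\<Sum>i<N. (cmod (v i))\<^sup>2)"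
  unfolding query_op_def by (intro sum.cong refl) (simp add: norm_mult)

definition nrm :: "nat \<Rightarrow> (nat \<Rightarrow> complex) \<Rightarrow> real" where
  "nrm N v = (\<Sum>i<N. (cmod (v i))\<^sup>2)"

lemma run_rest_norm:
  "(\<forall>U\<in>set Us. is_unitary (qdim m W) U) \<Longrightarrow>
   nrm (qdim m W) (run_rest m W xs Us v) = nrm (qdim m W) v"
proof (induction Us arbitrary: v)
  case Nil then show ?case by simp
next
  case (Cons U Us)
  then show ?case
    by (simp add: nrm_def unitary_norm query_norm)
qed

lemma init_norm: "0 < N \<Longrightarrow> nrm N init_state = 1"
proof -
  assume "0 < N"
  have "(\<Sum>i<N. (cmod (init_state i))\<^sup>2) = (\<Sum>i<N. if i = 0 then 1 else 0)"
    by (intro sum.cong refl) (simp add: init_state_def)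
  also have "\<dots> = 1" using \<open>0 < N\<close> by simp
  finally show ?thesis by (simp add: nrm_def)
qed

lemma final_norm:
  assumes "is_query_alg m t W Us"
  shows "nrm (qdim m W) (final_state m W xs Us) = 1"
proof -
  obtain U Us' where Us: "Us = U # Us'" using assms unfolding is_query_alg_def
    by (cases Us) auto
  have pos: "0 < qdim m W" using assms unfolding is_query_alg_def qdim_def by simp
  have u: "\<forall>U\<in>set Us. is_unitary (qdim m W) U" using assms unfolding is_query_alg_def by simp
  have "nrm (qdim m W) (apply_op (qdim m W) U init_state) = 1"
    using u pos unitary_norm[of "qdim m W" U init_state] init_norm[of "qdim m W"]
    by (simp add: Us nrm_def)
  then show ?thesis using u by (simp add: Us run_rest_norm)
qed

lemma out_prob_sum:
  "out_prob m W v True + out_prob m W v False = nrm (qdim m W) v"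
proof -
  have e: "\<And>b. {k. k < qdim m W \<and> (odd k \<longleftrightarrow> b)} = {k\<in>{..<qdim m W}. (odd k \<longleftrightarrow> b)}" by auto
  show ?thesis
    unfolding out_prob_def nrm_def e sum.inter_filter[OF finite_lessThan]
    by (simp add: sum.distrib[symmetric] cong: if_cong) (intro sum.cong refl, simp)
qed



definition sg :: "bool list \<Rightarrow> nat \<Rightarrow> complex" where
  "sg xs i = (if bit xs i then -1 else 1)"

definition Inp :: "bool list set" where
  "Inp = set [[False,False,False],[False,False,True],[False,True,False],[False,True,True],
              [True,False,False],[True,False,True],[True,True,False],[True,True,True]]"

definition chi :: "bool list \<Rightarrow> complex" where
  "chi xs = sg xs 1 * sg xs 2 * sg xs 3"

lemma bit3: "bit [p,q,r] i = (i = 1 \<and> p \<or> i = 2 \<and> q \<or> i = 3 \<and> r)"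
proof -
  have "1 \<le> i \<and> i \<le> 3 \<longleftrightarrow> i = 1 \<or> i = 2 \<or> i = 3" by auto
  then show ?thesis unfolding bit_def by (auto simp: numeral_3_eq_3)
qed

lemma sum_Inp: "(\<Sum>xs\<in>Inp. g xs) = g [False,False,False] + g [False,False,True] + g [False,True,False]
   + g [False,True,True] + g [True,False,False] + g [True,False,True] + g [True,True,False] + g [True,True,True]"
  by (simp add: Inp_def add_ac)

lemma Inp_len: "xs \<in> Inp \<Longrightarrow> length xs = 3"
  by (auto simp: Inp_def)

lemma key: "(\<Sum>xs\<in>Inp. chi xs * (sg xs a * sg xs b)) = 0"
  unfolding sum_Inp chi_def sg_def bit3
  by (cases "a=1"; cases "a=2"; cases "a=3"; cases "b=1"; cases "b=2"; cases "b=3"; simp)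

lemma key2: "(\<Sum>xs\<in>Inp. chi xs * (\<Sum>k<N. \<Sum>j<N. \<Sum>l<N. F k j l * (sg xs (g j) * sg xs (g l)))) = 0"
proof -
  have "(\<Sum>xs\<in>Inp. chi xs * (\<Sum>k<N. \<Sum>j<N. \<Sum>l<N. F k j l * (sg xs (g j) * sg xs (g l))))
      = (\<Sum>xs\<in>Inp. \<Sum>k<N. \<Sum>j<N. \<Sum>l<N. F k j l * (chi xs * (sg xs (g j) * sg xs (g l))))"
    by (simp add: sum_distrib_left mult_ac)
  also have "\<dots> = (\<Sum>k<N. \<Sum>xs\<in>Inp. \<Sum>j<N. \<Sum>l<N. F k j l * (chi xs * (sg xs (g j) * sg xs (g l))))"
    by (rule sum.swap)
  also have "\<dots> = (\<Sum>k<N. \<Sum>j<N. \<Sum>xs\<in>Inp. \<Sum>l<N. F k j l * (chi xs * (sg xs (g j) * sg xs (g l))))"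
    by (intro sum.cong refl) (rule sum.swap)
  also have "\<dots> = (\<Sum>k<N. \<Sum>j<N. \<Sum>l<N. \<Sum>xs\<in>Inp. F k j l * (chi xs * (sg xs (g j) * sg xs (g l))))"
    by (intro sum.cong refl) (rule sum.swap)
  also have "\<dots> = (\<Sum>k<N. \<Sum>j<N. \<Sum>l<N. F k j l * (\<Sum>xs\<in>Inp. chi xs * (sg xs (g j) * sg xs (g l))))"
    by (simp add: sum_distrib_left)
  also have "\<dots> = 0" by (simp add: key)
  finally show ?thesis .
qed

lemma cnorm_sq': "(complex_of_real (cmod z))\<^sup>2 = cnj z * z"
  by (metis cnorm_sq of_real_power)

lemma cnj_sg[simp]: "cnj (sg xs i) = sg xs i"
  by (simp add: sg_def)

lemma exact_P:
  assumes alg: "is_query_alg 3 t W Us" and ex: "computes_exactly 3 W Us f3" and xs: "xs \<in> Inp"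
  shows "out_prob 3 W (final_state 3 W xs Us) True = (if f3 xs then 1 else 0)"
proof -
  have e: "out_prob 3 W (final_state 3 W xs Us) (f3 xs) = 1"
    using ex Inp_len[OF xs] unfolding computes_exactly_def by blast
  have s: "out_prob 3 W (final_state 3 W xs Us) True + out_prob 3 W (final_state 3 W xs Us) False = 1"
    using out_prob_sum final_norm[OF alg] by simp
  show ?thesis using e s by (cases "f3 xs") auto
qed

lemma f3_sum: "(\<Sum>xs\<in>Inp. chi xs * complex_of_real (if f3 xs then 1 else 0)) = -1"
  unfolding sum_Inp chi_def sg_def f3_def bit3 by simp

lemma no_alg1:
  assumes alg: "is_query_alg 3 1 W Us" and ex: "computes_exactly 3 W Us f3"
  shows False
proof -
  define N where "N = qdim 3 W"
  obtain U0 U1 where Us: "Us = [U0, U1]" using alg unfolding is_query_alg_def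
    by (cases Us; cases "tl Us") auto
  define a where "a = apply_op N U0 init_state"
  define c where "c k j = U1 k j * a j" for k j
  define g where "g j = j div (2 * W)" for j
  have fin: "final_state 3 W xs Us k = (\<Sum>j<N. c k j * sg xs (g j))" for xs k
    by (simp add: Us N_def a_def c_def g_def apply_op_def query_op_def sg_def mult_ac)
  have P: "complex_of_real (out_prob 3 W (final_state 3 W xs Us) True)
     = (\<Sum>k<N. \<Sum>j<N. \<Sum>l<N. (of_bool (odd k) * (cnj (c k j) * c k l)) * (sg xs (g j) * sg xs (g l)))" for xs
  proof -
    have e: "{k. k < N \<and> (odd k \<longleftrightarrow> True)} = {k\<in>{..<N}. odd k}" by auto
    have "complex_of_real (out_prob 3 W (final_state 3 W xs Us) True)
        = (\<Sum>k<N. of_bool (odd k) * (cnj (final_state 3 W xs Us k) * final_state 3 W xs Us k))"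
      unfolding out_prob_def N_def[symmetric] e sum.inter_filter[OF finite_lessThan] of_real_sum
      by (intro sum.cong refl) (simp add: cnorm_sq')
    also have "\<dots> = (\<Sum>k<N. \<Sum>j<N. \<Sum>l<N. (of_bool (odd k) * (cnj (c k j) * c k l)) * (sg xs (g j) * sg xs (g l)))"
      unfolding fin by (simp add: sum_product sum_distrib_left mult_ac)
    finally show ?thesis .
  qed
  have "(\<Sum>xs\<in>Inp. chi xs * complex_of_real (out_prob 3 W (final_state 3 W xs Us) True)) = 0"
    unfolding P by (rule key2)
  moreover have "(\<Sum>xs\<in>Inp. chi xs * complex_of_real (out_prob 3 W (final_state 3 W xs Us) True)) = -1"
    unfolding f3_sum[symmetric] by (intro sum.cong refl) (simp only: exact_P[OF alg ex])
  ultimately show False by simp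
qed

lemma no_alg0:
  assumes alg: "is_query_alg 3 0 W Us" and ex: "computes_exactly 3 W Us f3"
  shows False
proof -
  obtain U0 where Us: "Us = [U0]" using alg unfolding is_query_alg_def
    by (cases Us) auto
  have fin: "final_state 3 W xs Us = apply_op (qdim 3 W) U0 init_state" for xs
    by (simp add: Us)
  have i1: "[False,False,True] \<in> Inp" and i0: "[False,False,False] \<in> Inp" by (simp_all add: Inp_def)
  have "f3 [False,False,True]" and "\<not> f3 [False,False,False]" by (simp_all add: f3_def bit3)
  then show False using exact_P[OF alg ex i1] exact_P[OF alg ex i0] by (simp add: fin)
qed



lemma parity3: "parity S [p,q,r] = ((1\<in>S \<and> p) \<noteq> ((2\<in>S \<and> q) \<noteq> (3\<in>S \<and> r)))"
proof -
  have e: "{i\<in>S. bit [p,q,r] i} = (if 1\<in>S \<and> p then {1} else {}) \<union> (if 2\<in>S \<and> q then {2} else {}) \<union> (if 3\<in>S \<and> r then {3::nat} else {})"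
    unfolding bit3 by auto
  show ?thesis unfolding parity_def e
    by (cases "1\<in>S"; cases p; cases "2\<in>S"; cases q; cases "3\<in>S"; cases r; simp)
qed

lemma parity_empty[simp]: "parity {} xs = False"
  by (simp add: parity_def)

lemma d1: "pdt_depth T \<le> 1 \<Longrightarrow> \<exists>S c. \<forall>xs. pdt_eval T xs = (parity S xs \<noteq> c)"
proof (cases T)
  case (Leaf b) then show ?thesis by (intro exI[of _ "{}"] exI[of _ b]) simp
next
  case (Node S l r)
  assume d: "pdt_depth T \<le> 1"
  then obtain b1 b2 where l: "l = Leaf b1" and r: "r = Leaf b2"
    using Node by (cases l; cases r) auto
  show ?thesis
  proof (cases "b1 = b2")
    case True then show ?thesis using Node l r by (intro exI[of _ "{}"] exI[of _ b1]) simp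
  next
    case False then show ?thesis using Node l r by (intro exI[of _ S] exI[of _ b1]) auto
  qed
qed

lemma d2: "pdt_depth T \<le> 2 \<Longrightarrow> \<exists>S L R c1 c2. \<forall>xs. pdt_eval T xs =
   (if parity S xs then (parity R xs \<noteq> c2) else (parity L xs \<noteq> c1))"
proof (cases T)
  case (Leaf b)
  have "\<forall>xs. pdt_eval T xs = (if parity {} xs then (parity {} xs \<noteq> b) else (parity {} xs \<noteq> b))"
    using Leaf by simp
  then show ?thesis by blast
next
  case (Node S l r)
  assume "pdt_depth T \<le> 2"
  then have l: "pdt_depth l \<le> 1" and r: "pdt_depth r \<le> 1" using Node by auto
  obtain L c1 where L: "\<forall>xs. pdt_eval l xs = (parity L xs \<noteq> c1)" using d1[OF l] by blast
  obtain R c2 where R: "\<forall>xs. pdt_eval r xs = (parity R xs \<noteq> c2)" using d1[OF r] by blast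
  have "\<forall>xs. pdt_eval T xs = (if parity S xs then (parity R xs \<noteq> c2) else (parity L xs \<noteq> c1))"
    using Node L R by simp
  then show ?thesis by blast
qed

definition "par a b c x y z = ((a \<and> x) \<noteq> ((b \<and> y) \<noteq> (c \<and> z)))"
definition "ev p1 p2 p3 l1 l2 l3 r1 r2 r3 c1 c2 x y z =
  (if par p1 p2 p3 x y z then (par r1 r2 r3 x y z \<noteq> c2) else (par l1 l2 l3 x y z \<noteq> c1))"
lemma sat3: "ev p1 p2 p3 l1 l2 l3 r1 r2 r3 c1 c2 False False False = False \<Longrightarrow>
  ev p1 p2 p3 l1 l2 l3 r1 r2 r3 c1 c2 False False True = True \<Longrightarrow>
  ev p1 p2 p3 l1 l2 l3 r1 r2 r3 c1 c2 False True False = False \<Longrightarrow>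
  ev p1 p2 p3 l1 l2 l3 r1 r2 r3 c1 c2 False True True = False \<Longrightarrow>
  ev p1 p2 p3 l1 l2 l3 r1 r2 r3 c1 c2 True False False = False \<Longrightarrow>
  ev p1 p2 p3 l1 l2 l3 r1 r2 r3 c1 c2 True False True = False \<Longrightarrow>
  ev p1 p2 p3 l1 l2 l3 r1 r2 r3 c1 c2 True True False = True \<Longrightarrow>
  ev p1 p2 p3 l1 l2 l3 r1 r2 r3 c1 c2 True True True = True \<Longrightarrow> False"
  unfolding ev_def par_def
  by (cases p1; cases p2; cases p3; simp; cases c1; cases c2; simp; blast)

lemma pdt_lower: "pdt_computes 3 T f3 \<Longrightarrow> pdt_depth T \<ge> 3"
proof (rule ccontr)
  assume c: "pdt_computes 3 T f3" and "\<not> pdt_depth T \<ge> 3"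
  then have "pdt_depth T \<le> 2" by simp
  then obtain S L R c1 c2 where ev: "\<forall>xs. pdt_eval T xs =
   (if parity S xs then (parity R xs \<noteq> c2) else (parity L xs \<noteq> c1))" using d2 by blast
  have h: "\<forall>xs\<in>Inp. (if parity S xs then (parity R xs \<noteq> c2) else (parity L xs \<noteq> c1)) = f3 xs"
    using c ev Inp_len unfolding pdt_computes_def by metis
  have e: "ev (1\<in>S) (2\<in>S) (3\<in>S) (1\<in>L) (2\<in>L) (3\<in>L) (1\<in>R) (2\<in>R) (3\<in>R) c1 c2 x y z = f3 [x,y,z]"
    if "[x,y,z] \<in> Inp" for x y z
    using h that unfolding ev_def par_def parity3[symmetric] by blast
  have i: "[x,y,z] \<in> Inp" for x y z by (cases x; cases y; cases z; simp add: Inp_def)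
  show False
    apply (rule sat3[of "1\<in>S" "2\<in>S" "3\<in>S" "1\<in>L" "2\<in>L" "3\<in>L" "1\<in>R" "2\<in>R" "3\<in>R" c1 c2])
    by (simp_all only: e[OF i]) (simp_all add: f3_def bit3)
qed



definition s :: complex where "s = of_real (sqrt 2)"
lemma ss[simp]: "s * s = 2" unfolding s_def
  by (metis of_real_mult of_real_numeral real_sqrt_mult_self abs_numeral)
lemma ss2[simp]: "s * (s * x) = 2 * x" by (simp add: mult.assoc[symmetric])
lemma cnj_s[simp]: "cnj s = s" unfolding s_def by simp

definition matl :: "complex list list \<Rightarrow> nat \<Rightarrow> nat \<Rightarrow> complex" where
  "matl M i j = (if i < length M \<and> j < length (M!i) then M!i!j else 0)"
definition vecl :: "complex list \<Rightarrow> nat \<Rightarrow> complex" where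
  "vecl l i = (if i < length l then l!i else 0)"
definition mvec :: "nat \<Rightarrow> complex list list \<Rightarrow> (nat \<Rightarrow> complex) \<Rightarrow> complex list" where
  "mvec n M v = map (\<lambda>row. \<Sum>j<n. (if j < length row then row!j else 0) * v j) M"
definition qv :: "bool list \<Rightarrow> complex list \<Rightarrow> complex list" where
  "qv xs l = map (\<lambda>(k,a). (if bit xs (k div 2) then -1 else 1) * a) (zip [0..<length l] l)"

lemma apply_op_matl: "apply_op n (matl M) v = vecl (mvec n M v)"
  by (rule ext) (simp add: apply_op_def matl_def vecl_def mvec_def)

lemma query_vecl: "query_op 1 xs (vecl l) = vecl (qv xs l)"
  by (rule ext) (simp add: query_op_def vecl_def qv_def)

lemma init_vecl: "init_state = vecl [1,0,0,0,0,0,0,0]"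
proof (rule ext)
  fix i show "init_state i = vecl [1,0,0,0,0,0,0,0] i"
    by (cases i) (simp_all add: init_state_def vecl_def nth_Cons')
qed

definition L0 :: "complex list list" where
  "L0 = [[1/2,0,1/2,0,1/2,0,1/2,0],
      [0,1,0,0,0,0,0,0],
      [1/2,0,-1/2,0,1/2,0,-1/2,0],
      [0,0,0,1,0,0,0,0],
      [1/2,0,1/2,0,-1/2,0,-1/2,0],
      [0,0,0,0,0,1,0,0],
      [1/2,0,-1/2,0,-1/2,0,1/2,0],
      [0,0,0,0,0,0,0,1]]"

definition L1 :: "complex list list" where
  "L1 = [[s/4, 0, s/4, s/2, s/4, 0, s/4, 0],
    [0, 1, 0, 0, 0, 0, 0, 0],
    [s/4, 0, -s/4, 0, -s/4, s/2, s/4, 0],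
    [1/2, 0, 0, 0, 0, 0, -1/2, s/2],
    [s/4, 0, -s/4, 0, -s/4, -s/2, s/4, 0],
    [1/2, 0, 0, 0, 0, 0, -1/2, -s/2],
    [0, 0, s/2, 0, -s/2, 0, 0, 0],
    [s/4, 0, s/4, -s/2, s/4, 0, s/4, 0]]"

definition L2 :: "complex list list" where
  "L2 = [[s/2, 0, 0, 0, 0, 0, 0, s/2],
    [0, 0, s/2, 0, s/2, 0, 0, 0],
    [0, 0, s/2, 0, -s/2, 0, 0, 0],
    [s/2, 0, 0, 0, 0, 0, 0, -s/2],
    [0, 0, 0, s/2, 0, -s/2, 0, 0],
    [0, 0, 0, s/2, 0, s/2, 0, 0],
    [0, 0, 0, 0, 0, 0, 1, 0],
    [0, 1, 0, 0, 0, 0, 0, 0]]"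

definition gram :: "complex list list \<Rightarrow> complex list list" where
  "gram M = map (\<lambda>j. map (\<lambda>k. sum_list (map (\<lambda>row. cnj (row!j) * row!k) M)) [0..<8]) [0..<8]"

definition idl :: "complex list list" where
  "idl = map (\<lambda>j. map (\<lambda>k. if j = k then 1 else 0) [0..<8]) [0..<8]"

lemma gram_unitary:
  assumes l: "length M = 8" and r: "\<forall>row\<in>set M. length row = 8" and g: "gram M = idl"
  shows "is_unitary 8 (matl M)"
  unfolding is_unitary_def
proof (intro allI impI)
  fix j k :: nat assume j: "j < 8" and k: "k < 8"
  have "(\<Sum>i<8. cnj (matl M i j) * matl M i k) = (\<Sum>i<length M. cnj (M!i!j) * M!i!k)"
    using l r j k by (intro sum.cong) (auto simp: matl_def)
  also have "\<dots> = sum_list (map (\<lambda>row. cnj (row!j) * row!k) M)"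
    by (simp add: sum_list_sum_nth atLeast0LessThan)
  also have "\<dots> = gram M ! j ! k" using j k by (simp add: gram_def)
  also have "\<dots> = (if j = k then 1 else 0)" using j k by (simp add: g idl_def)
  finally show "(\<Sum>i<8. cnj (matl M i j) * matl M i k) = (if j = k then 1 else 0)" .
qed

lemma "[0..<8] = [0,1,2,3,4,5,6,7::nat]" by (simp add: upt_rec)
lemma u0: "is_unitary 8 (matl L0)"
  by (rule gram_unitary) (simp_all add: L0_def gram_def idl_def upt_rec)
lemma u1: "is_unitary 8 (matl L1)"
  by (rule gram_unitary) (simp_all add: L1_def gram_def idl_def upt_rec)
lemma u2: "is_unitary 8 (matl L2)"
  by (rule gram_unitary) (simp_all add: L2_def gram_def idl_def upt_rec)
lemma g0: "gram L0 = idl"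
  by (simp add: L0_def gram_def idl_def upt_rec)
lemma g1: "gram L1 = idl"
  by (simp add: L1_def gram_def idl_def upt_rec)
lemma g2: "gram L2 = idl"
  by (simp add: L2_def gram_def idl_def upt_rec)
lemma sum8: "(\<Sum>i<(8::nat). f i) = f 0 + f 1 + f 2 + f 3 + f 4 + f 5 + f 6 + (f 7 :: 'a::comm_monoid_add)"
  by (simp add: eval_nat_numeral add_ac)

definition Alg :: "(nat \<Rightarrow> nat \<Rightarrow> complex) list" where
  "Alg = [matl L0, matl L1, matl L2]"

lemma qd: "qdim 3 1 = 8" by (simp add: qdim_def)
lemma qd': "qdim 3 (Suc 0) = 8" by (simp add: qdim_def)
lemma query_vecl': "query_op (Suc 0) xs (vecl l) = vecl (qv xs l)"
  using query_vecl by simp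

lemma fin_eval: "final_state 3 1 xs Alg =
  vecl (mvec 8 L2 (vecl (qv xs (mvec 8 L1 (vecl (qv xs (mvec 8 L0 (vecl [1,0,0,0,0,0,0,0]))))))))"
  by (simp add: Alg_def qd qd' init_vecl apply_op_matl query_vecl')

lemma out_prob8: "out_prob 3 1 v b = (\<Sum>k<(8::nat). if (odd k \<longleftrightarrow> b) then (cmod (v k))\<^sup>2 else 0)"
proof -
  have e: "{k. k < qdim 3 1 \<and> (odd k \<longleftrightarrow> b)} = {k\<in>{..<8}. (odd k \<longleftrightarrow> b)}" by (auto simp: qd qd')
  show ?thesis unfolding out_prob_def e sum.inter_filter[OF finite_lessThan] ..
qed

lemma bit3': "bit [p,q,r] i = (i = 1 \<and> p \<or> i = 2 \<and> q \<or> i = 3 \<and> r)"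
proof -
  have "1 \<le> i \<and> i \<le> 3 \<longleftrightarrow> i = 1 \<or> i = 2 \<or> i = 3" by auto
  then show ?thesis unfolding bit_def by (auto simp: numeral_3_eq_3)
qed

lemma zero_wrong: "out_prob 3 1 (final_state 3 1 [a,b,c] Alg) (\<not> f3 [a,b,c]) = 0"
  unfolding fin_eval out_prob8 sum8
  by (cases a; cases b; cases c; simp add: mvec_def qv_def L0_def L1_def L2_def sum8 vecl_def bit_def upt_rec f3_def)

lemma alg_ok: "is_query_alg 3 2 1 Alg"
  unfolding is_query_alg_def Alg_def qd using u0 u1 u2 by simp

lemma alg_exact: "computes_exactly 3 1 Alg f3"
  unfolding computes_exactly_def
proof (intro allI impI)
  fix xs :: "bool list" assume "length xs = 3"
  then obtain a b c where xs: "xs = [a,b,c]"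
    by (metis (no_types) length_0_conv length_Suc_conv numeral_3_eq_3)
  have z: "out_prob 3 1 (final_state 3 1 xs Alg) (\<not> f3 xs) = 0" using zero_wrong xs by simp
  have "out_prob 3 1 (final_state 3 1 xs Alg) True + out_prob 3 1 (final_state 3 1 xs Alg) False = 1"
    using out_prob_sum final_norm[OF alg_ok] by simp
  then show "out_prob 3 1 (final_state 3 1 xs Alg) (f3 xs) = 1" using z by (cases "f3 xs") auto
qed

theorem mainTheorem7:
  shows "Q_E 3 f3 = 2 \<and> (\<forall>T. pdt_computes 3 T f3 \<longrightarrow> pdt_depth T \<ge> 3)"
proof
  show "Q_E 3 f3 = 2"
    unfolding Q_E_def
  proof (rule Least_equality)
    show "\<exists>W Us. is_query_alg 3 2 W Us \<and> computes_exactly 3 W Us f3"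
      using alg_ok alg_exact by blast
  next
    fix t assume "\<exists>W Us. is_query_alg 3 t W Us \<and> computes_exactly 3 W Us f3"
    then obtain W Us where a: "is_query_alg 3 t W Us" and e: "computes_exactly 3 W Us f3" by blast
    show "2 \<le> t"
    proof (rule ccontr)
      assume "\<not> 2 \<le> t"
      then have "t = 0 \<or> t = 1" by auto
      then show False using a e no_alg0 no_alg1 by blast
    qed
  qed
next
  show "\<forall>T. pdt_computes 3 T f3 \<longrightarrow> pdt_depth T \<ge> 3" using pdt_lower by blast
qed

end
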